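(* Let $p$ be a prime, $\tau\in(0,1)$, $\alpha>1/2$, $d\in\mathbb{N}$, and let $\gamma=(\gamma_u)_u$ be weights with $0<\gamma_u\le1$. Then there exists a subset $Z_{p,\tau}\subseteq\{1:p-1\}^d$ with $|Z_{p,\tau}|\ge\lceil\tau(p-1)^d\rceil$ such that every $z\in Z_{p,\tau}$ satisfies $$e^{\rm det}_{d,\alpha,\gamma}(Q_p^z)\le\inf_{1/2\le\lambda<\alpha}\Big(\frac{2}{(1-\tau)(p-1)}V_d(\alpha/\lambda,\gamma^{1/\lambda})\Big)^{\lambda}.$$
   Context: $\{1:m\}:=\{1,\ldots,m\}$. Weights $\gamma=(\gamma_u)_u$ indexed by finite $u\subset\mathbb{N}$, $0<\gamma_u\le1$, $\gamma_\emptyset=1$. For $h\in\mathbb{Z}^d$, $\mathrm{supp}(h)=\{j:h_j\ne0\}$, $r_{d,\alpha,\gamma}(h)=\gamma_{\mathrm{supp}(h)}^{-1}\prod_{j\in\mathrm{supp}(h)}|h_j|^\alpha$. The weighted Korobov space $\mathcal{H}_{d,\alpha,\gamma}$ consists of $f\colon[0,1]^d\to\mathbb{C}$ with absolutely convergent Fourier series and finite norm $\|f\|_{d,\alpha,\gamma}^2=\sum_h r_{d,\alpha,\gamma}(h)^2|\hat f(h)|^2$. $I_d(f)=\int_{[0,1]^d}f$. Lattice rule $Q_p^z(f)=\frac1p\sum_{k=0}^{p-1}f(\{kz/p\})$. $e^{\rm det}_{d,\alpha,\gamma}(Q_p^z)=\sup_{\|f\|_{d,\alpha,\gamma}\le1}|I_d(f)-Q_p^z(f)|$;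 equivalently $e^{\rm det}_{d,\alpha,\gamma}(Q_p^z)^2=\sum_{h\in\mathbb{Z}^d\setminus\{0\},\,h\cdot z\equiv0\ (\mathrm{mod}\ p)}r_{d,\alpha,\gamma}(h)^{-2}$. Notation: $\gamma^{1/\lambda}=(\gamma_u^{1/\lambda})_u$ and for $\beta>1$, $V_d(\beta,\gamma)=\sum_{\emptyset\ne u\subseteq\{1:d\}}\gamma_u(2\zeta(\beta))^{|u|}$, where $\zeta$ is the Riemann zeta function; thus $V_d(\alpha/\lambda,\gamma^{1/\lambda})=\sum_{\emptyset\ne u\subseteq\{1:d\}}\gamma_u^{1/\lambda}(2\zeta(\alpha/\lambda))^{|u|}$. *)

theory Defs
  imports "HOL-Analysis.Analysis"
begin

text \<open>Integer vectors in Z^d are represented as functions nat => int supported in {1..d}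
  (coordinates 1..d, value 0 outside).\<close>

definition intvecs :: "nat \<Rightarrow> (nat \<Rightarrow> int) set" where
  "intvecs d = {h. \<forall>j. j \<notin> {1..d} \<longrightarrow> h j = 0}"

definition supp :: "nat \<Rightarrow> (nat \<Rightarrow> int) \<Rightarrow> nat set" where
  "supp d h = {j \<in> {1..d}. h j \<noteq> 0}"

definition r_weight :: "nat \<Rightarrow> real \<Rightarrow> (nat set \<Rightarrow> real) \<Rightarrow> (nat \<Rightarrow> int) \<Rightarrow> real" where
  "r_weight d \<alpha> \<gamma> h = inverse (\<gamma> (supp d h)) * (\<Prod>j\<in>supp d h. \<bar>real_of_int (h j)\<bar> powr \<alpha>)"

definition dotp :: "nat \<Rightarrow> (nat \<Rightarrow> int) \<Rightarrow> (nat \<Rightarrow> int) \<Rightarrow> int" where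
  "dotp d h z = (\<Sum>j=1..d. h j * z j)"

definition dual_nz :: "nat \<Rightarrow> nat \<Rightarrow> (nat \<Rightarrow> int) \<Rightarrow> (nat \<Rightarrow> int) set" where
  "dual_nz d p z = {h \<in> intvecs d. h \<noteq> (\<lambda>_. 0) \<and> dotp d h z mod int p = 0}"

text \<open>Squared worst-case error e^det_{d,alpha,gamma}(Q_p^z)^2, as an (always defined)
  sum of nonnegative terms in ennreal.\<close>
definition e_det_sq :: "nat \<Rightarrow> real \<Rightarrow> (nat set \<Rightarrow> real) \<Rightarrow> nat \<Rightarrow> (nat \<Rightarrow> int) \<Rightarrow> ennreal" where
  "e_det_sq d \<alpha> \<gamma> p z = (\<Sum>\<^sub>\<infinity> h\<in>dual_nz d p z. ennreal ((r_weight d \<alpha> \<gamma> h) powi (-2)))"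

definition rzeta :: "real \<Rightarrow> real" where
  "rzeta \<beta> = (\<Sum>n. 1 / (real (Suc n)) powr \<beta>)"

definition V :: "nat \<Rightarrow> real \<Rightarrow> (nat set \<Rightarrow> real) \<Rightarrow> real" where
  "V d \<beta> \<gamma> = (\<Sum>u\<in>Pow {1..d} - {{}}. \<gamma> u * (2 * rzeta \<beta>) ^ card u)"

definition genvecs :: "nat \<Rightarrow> nat \<Rightarrow> (nat \<Rightarrow> int) set" where
  "genvecs d p = {z \<in> intvecs d. \<forall>j\<in>{1..d}. 1 \<le> z j \<and> z j \<le> int p - 1}"

end

theory Submission
  imports Defs
begin


lemma powr_superadd:
  fixes x y t :: real
  assumes "0 \<le> x" "0 \<le> y" "1 \<le> t"
  shows "x powr t + y powr t \<le> (x+y) powr t"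
proof (cases "x = 0 \<or> y = 0")
  case True then show ?thesis using assms by auto
next
  case False
  then have xp: "x > 0" and yp: "y > 0" using assms by auto
  have e1: "x powr t = x * x powr (t-1)" using xp by (simp add: powr_mult_base)
  have e2: "y powr t = y * y powr (t-1)" using yp by (simp add: powr_mult_base)
  have e3: "(x+y) powr t = (x+y) * (x+y) powr (t-1)" using xp yp by (simp add: powr_mult_base)
  have "x powr (t-1) \<le> (x+y) powr (t-1)" using xp yp assms by (intro powr_mono2) auto
  then have a: "x * x powr (t-1) \<le> x * (x+y) powr (t-1)" using xp by (intro mult_left_mono) auto
  have "y powr (t-1) \<le> (x+y) powr (t-1)" using xp yp assms by (intro powr_mono2) auto
  then have b: "y * y powr (t-1) \<le> y * (x+y) powr (t-1)" using yp by (intro mult_left_mono) auto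
  show ?thesis unfolding e1 e2 e3 using a b by (simp add: distrib_right)
qed

lemma sum_powr_le:
  fixes f :: "'a \<Rightarrow> real"
  assumes "finite F" "\<And>i. i \<in> F \<Longrightarrow> 0 \<le> f i" "1 \<le> t"
  shows "(\<Sum>i\<in>F. f i powr t) \<le> (sum f F) powr t"
  using assms
proof (induction F rule: finite_induct)
  case empty then show ?case by simp
next
  case (insert a F)
  have "(\<Sum>i\<in>insert a F. f i powr t) = f a powr t + (\<Sum>i\<in>F. f i powr t)" using insert by simp
  also have "\<dots> \<le> f a powr t + (sum f F) powr t" using insert by simp
  also have "\<dots> \<le> (f a + sum f F) powr t" using insert by (intro powr_superadd) (auto intro: sum_nonneg)
  finally show ?case using insert by simp
qed



lemma card_genvecs:
  assumes "p \<ge> 1"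
  shows "card (genvecs d p) = (p - 1) ^ d"
proof -
  define ext :: "(nat \<Rightarrow> int) \<Rightarrow> (nat \<Rightarrow> int)" where "ext f = (\<lambda>j. if j \<in> {1..d} then f j else 0)" for f
  have eq: "genvecs d p = ext ` (PiE {1..d} (\<lambda>_. {1..int p - 1}))"
  proof
    show "genvecs d p \<subseteq> ext ` (PiE {1..d} (\<lambda>_. {1..int p - 1}))"
    proof
      fix z assume z: "z \<in> genvecs d p"
      have "z = ext (restrict z {1..d})" using z unfolding ext_def genvecs_def intvecs_def by auto
      moreover have "restrict z {1..d} \<in> PiE {1..d} (\<lambda>_. {1..int p - 1})" using z unfolding genvecs_def by auto
      ultimately show "z \<in> ext ` (PiE {1..d} (\<lambda>_. {1..int p - 1}))" by blast
    qed
    show "ext ` (PiE {1..d} (\<lambda>_. {1..int p - 1})) \<subseteq> genvecs d p"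
      unfolding ext_def genvecs_def intvecs_def by (auto simp: PiE_def Pi_def)
  qed
  have inj: "inj_on ext (PiE {1..d} (\<lambda>_. {1..int p - 1}))"
  proof (rule inj_onI)
    fix f g assume f: "f \<in> PiE {1..d} (\<lambda>_. {1..int p - 1})" and g: "g \<in> PiE {1..d} (\<lambda>_. {1..int p - 1})" and e: "ext f = ext g"
    show "f = g"
    proof (rule PiE_ext[OF f g])
      fix x assume "x \<in> {1..d}" then show "f x = g x" using fun_cong[OF e, of x] unfolding ext_def by auto
    qed
  qed
  have "card (genvecs d p) = card (PiE {1..d} (\<lambda>_. {1..int p - 1}))" unfolding eq using inj by (rule card_image)
  also have "\<dots> = (\<Prod>i\<in>{1..d}. card {1..int p - 1})" by (rule card_PiE) simp
  also have "\<dots> = (p - 1) ^ d" using assms by (simp add: nat_diff_distrib')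
  finally show ?thesis .
qed

lemma finite_genvecs: "finite (genvecs d p)"
proof -
  have "genvecs d p \<subseteq> (\<lambda>f j. if j \<in> {1..d} then f j else 0) ` (PiE {1..d} (\<lambda>_. {1..int p - 1}))"
  proof
    fix z assume z: "z \<in> genvecs d p"
    have "z = (\<lambda>f j. if j \<in> {1..d} then f j else 0) (restrict z {1..d})" using z unfolding genvecs_def intvecs_def by auto
    moreover have "restrict z {1..d} \<in> PiE {1..d} (\<lambda>_. {1..int p - 1})" using z unfolding genvecs_def by auto
    ultimately show "z \<in> (\<lambda>f j. if j \<in> {1..d} then f j else 0) ` (PiE {1..d} (\<lambda>_. {1..int p - 1}))" by blast
  qed
  then show ?thesis by (rule finite_subset) (intro finite_imageI finite_PiE; simp)
qed



lemma dotp_diff: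
  assumes "j \<in> {1..d}" "z(j:=0) = z'(j:=0)"
  shows "dotp d h z - dotp d h z' = h j * (z j - z' j)"
proof -
  have "dotp d h z - dotp d h z' = (\<Sum>i=1..d. h i * (z i - z' i))"
    unfolding dotp_def by (simp add: sum_subtractf right_diff_distrib)
  also have "\<dots> = (\<Sum>i=1..d. if i = j then h j * (z j - z' j) else 0)"
  proof (rule sum.cong)
    fix i assume "i \<in> {1..d}"
    show "h i * (z i - z' i) = (if i = j then h j * (z j - z' j) else 0)"
      using fun_cong[OF assms(2), of i] by auto
  qed simp
  also have "\<dots> = h j * (z j - z' j)" using assms(1) by simp
  finally show ?thesis .
qed

lemma count_bound:
  assumes "prime p" "j \<in> {1..d}" "\<not> int p dvd h j"
  shows "card {z\<in>genvecs d p. dotp d h z mod int p = 0} * (p-1) \<le> card (genvecs d p)"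
proof -
  define G where "G = genvecs d p"
  define S where "S = {z\<in>G. dotp d h z mod int p = 0}"
  define \<phi> where "\<phi> z = z(j:=0)" for z :: "nat \<Rightarrow> int"
  have p2: "p \<ge> 2" using assms(1) prime_ge_2_nat by blast
  have finG: "finite G" unfolding G_def by (rule finite_genvecs)
  have bij: "bij_betw (\<lambda>z. (\<phi> z, z j)) G (\<phi>`G \<times> {1..int p-1})"
  proof (rule bij_betw_imageI)
    show "inj_on (\<lambda>z. (\<phi> z, z j)) G"
    proof (rule inj_onI)
      fix x y assume "(\<phi> x, x j) = (\<phi> y, y j)"
      then have "x(j:=0) = y(j:=0)" "x j = y j" unfolding \<phi>_def by auto
      then show "x = y" by (metis fun_upd_triv fun_upd_upd)
    qed
    show "(\<lambda>z. (\<phi> z, z j)) ` G = \<phi> ` G \<times> {1..int p - 1}"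
    proof
      show "(\<lambda>z. (\<phi> z, z j)) ` G \<subseteq> \<phi> ` G \<times> {1..int p - 1}"
        using assms(2) unfolding G_def genvecs_def by auto
      show "\<phi> ` G \<times> {1..int p - 1} \<subseteq> (\<lambda>z. (\<phi> z, z j)) ` G"
      proof
        fix yk assume "yk \<in> \<phi> ` G \<times> {1..int p - 1}"
        then obtain z0 k where z0: "z0 \<in> G" and k: "k \<in> {1..int p - 1}" and yk: "yk = (\<phi> z0, k)" by auto
        have "z0(j:=k) \<in> G" using z0 k assms(2) unfolding G_def genvecs_def intvecs_def by auto
        moreover have "(\<phi> (z0(j:=k)), (z0(j:=k)) j) = yk" using yk unfolding \<phi>_def by simp
        ultimately show "yk \<in> (\<lambda>z. (\<phi> z, z j)) ` G" by force
      qed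
    qed
  qed
  have cG: "card G = card (\<phi>`G) * (p-1)"
    using bij_betw_same_card[OF bij] p2 by (simp add: card_cartesian_product nat_diff_distrib')
  have inj: "inj_on \<phi> S"
  proof (rule inj_onI)
    fix x y assume x: "x \<in> S" and y: "y \<in> S" and e: "\<phi> x = \<phi> y"
    have e': "x(j:=0) = y(j:=0)" using e unfolding \<phi>_def .
    have d: "dotp d h x - dotp d h y = h j * (x j - y j)" by (rule dotp_diff[OF assms(2) e'])
    have "int p dvd dotp d h x" "int p dvd dotp d h y" using x y unfolding S_def by auto
    then have "int p dvd h j * (x j - y j)" using d by (metis dvd_diff)
    moreover have "prime (int p)" using assms(1) by simp
    ultimately have "int p dvd (x j - y j)" using assms(3) prime_dvd_mult_iff by blast
    moreover have b: "1 \<le> x j \<and> x j \<le> int p - 1 \<and> 1 \<le> y j \<and> y j \<le> int p - 1" using x y assms(2) unfolding S_def G_def genvecs_def by auto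
    ultimately have "x j = y j"
    proof -
      assume dv: "int p dvd (x j - y j)" and b: "1 \<le> x j \<and> x j \<le> int p - 1 \<and> 1 \<le> y j \<and> y j \<le> int p - 1"
      show "x j = y j"
      proof (rule ccontr)
        assume "x j \<noteq> y j"
        then have "\<bar>int p\<bar> \<le> \<bar>x j - y j\<bar>" using dv by (intro dvd_imp_le_int) auto
        then show False using b by linarith
      qed
    qed
    then show "x = y" using e' by (metis fun_upd_triv fun_upd_upd)
  qed
  have "card S = card (\<phi>`S)" using inj by (simp add: card_image)
  also have "\<dots> \<le> card (\<phi>`G)" unfolding S_def by (intro card_mono finite_imageI finG) auto
  finally have "card S * (p-1) \<le> card (\<phi>`G) * (p-1)" by simp
  then show ?thesis using cG unfolding S_def G_def by simp
qed



lemma zeta_summable: assumes "\<beta> > 1" shows "summable (\<lambda>n. 1 / (real (Suc n)) powr \<beta>)"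
proof -
  have "summable (\<lambda>n. real n powr (-\<beta>))" using assms by (subst summable_real_powr_iff) simp
  then have "summable (\<lambda>n. real (Suc n) powr (-\<beta>))" by (subst summable_Suc_iff)
  then show ?thesis by (simp add: powr_minus_divide)
qed

lemma zeta_partial: assumes "\<beta> > 1" "finite N" shows "(\<Sum>n\<in>N. 1 / (real (Suc n)) powr \<beta>) \<le> rzeta \<beta>"
  unfolding rzeta_def using assms zeta_summable by (intro sum_le_suminf) auto

lemma zeta_finite:
  fixes K :: "int set"
  assumes "\<beta> > 1" "finite K" "0 \<notin> K"
  shows "(\<Sum>k\<in>K. \<bar>real_of_int k\<bar> powr (-\<beta>)) \<le> 2 * rzeta \<beta>"
proof -
  define Np where "Np = {n. int (Suc n) \<in> K}"
  define Nm where "Nm = {n. - int (Suc n) \<in> K}"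
  have injp: "inj (\<lambda>n. int (Suc n))" by (auto simp: inj_def)
  have injm: "inj (\<lambda>n. - int (Suc n))" by (auto simp: inj_def)
  have fNp: "finite Np" unfolding Np_def using finite_vimageI[OF assms(2) injp] by (simp add: vimage_def)
  have fNm: "finite Nm" unfolding Nm_def using finite_vimageI[OF assms(2) injm] by (simp add: vimage_def)
  have Kp: "{k\<in>K. 0 < k} = (\<lambda>n. int (Suc n)) ` Np"
  proof
    show "{k\<in>K. 0 < k} \<subseteq> (\<lambda>n. int (Suc n)) ` Np"
    proof
      fix k assume k: "k \<in> {k\<in>K. 0 < k}"
      then have "k = int (Suc (nat k - 1))" by auto
      then show "k \<in> (\<lambda>n. int (Suc n)) ` Np" using k unfolding Np_def by (intro image_eqI[of _ _ "nat k - 1"]) auto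
    qed
  qed (auto simp: Np_def)
  have Km: "{k\<in>K. \<not> 0 < k} = (\<lambda>n. - int (Suc n)) ` Nm"
  proof
    show "{k\<in>K. \<not> 0 < k} \<subseteq> (\<lambda>n. - int (Suc n)) ` Nm"
    proof
      fix k assume k: "k \<in> {k\<in>K. \<not> 0 < k}"
      then have k0: "k < 0" using assms(3) by (cases "k = 0") auto
      then have "k = - int (Suc (nat (-k) - 1))" by auto
      then show "k \<in> (\<lambda>n. - int (Suc n)) ` Nm" using k unfolding Nm_def by (intro image_eqI[of _ _ "nat (-k) - 1"]) auto
    qed
  qed (auto simp: Nm_def)
  have "(\<Sum>k\<in>K. \<bar>real_of_int k\<bar> powr (-\<beta>)) = (\<Sum>k\<in>{k\<in>K. 0 < k}. \<bar>real_of_int k\<bar> powr (-\<beta>)) + (\<Sum>k\<in>{k\<in>K. \<not> 0 < k}. \<bar>real_of_int k\<bar> powr (-\<beta>))"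
    using sum.Int_Diff[OF assms(2), of "\<lambda>k. \<bar>real_of_int k\<bar> powr (-\<beta>)" "{k. 0 < k}"] by (simp add: Int_def set_diff_eq conj_commute)
  also have "(\<Sum>k\<in>{k\<in>K. 0 < k}. \<bar>real_of_int k\<bar> powr (-\<beta>)) = (\<Sum>n\<in>Np. 1 / (real (Suc n)) powr \<beta>)"
    unfolding Kp by (subst sum.reindex) (use injp in \<open>auto simp: inj_on_def powr_minus_divide add.commute\<close>)
  also have "(\<Sum>k\<in>{k\<in>K. \<not> 0 < k}. \<bar>real_of_int k\<bar> powr (-\<beta>)) = (\<Sum>n\<in>Nm. 1 / (real (Suc n)) powr \<beta>)"
    unfolding Km by (subst sum.reindex) (use injm in \<open>auto simp: inj_on_def powr_minus_divide add.commute\<close>)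
  finally show ?thesis using zeta_partial[OF assms(1) fNp] zeta_partial[OF assms(1) fNm] by linarith
qed



lemma prod_bound:
  fixes u :: "nat set" and Fu :: "(nat \<Rightarrow> int) set"
  assumes "\<beta> > 1" "finite u" "finite Fu" "\<And>h j. h \<in> Fu \<Longrightarrow> j \<in> u \<Longrightarrow> h j \<noteq> 0"
    "inj_on (\<lambda>h. restrict h u) Fu"
  shows "(\<Sum>h\<in>Fu. \<Prod>j\<in>u. \<bar>real_of_int (h j)\<bar> powr (-\<beta>)) \<le> (2 * rzeta \<beta>) ^ card u"
proof -
  define g where "g k = \<bar>real_of_int k\<bar> powr (-\<beta>)" for k :: int
  define K where "K = (\<Union>h\<in>Fu. h ` u)"
  have fK: "finite K" unfolding K_def using assms(2,3) by auto
  have K0: "0 \<notin> K" unfolding K_def using assms(4) by force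
  have "(\<Sum>h\<in>Fu. \<Prod>j\<in>u. g (h j)) = (\<Sum>f\<in>(\<lambda>h. restrict h u) ` Fu. \<Prod>j\<in>u. g (f j))"
    by (subst sum.reindex[OF assms(5)]) (auto intro!: sum.cong prod.cong)
  also have "\<dots> \<le> (\<Sum>f\<in>PiE u (\<lambda>_. K). \<Prod>j\<in>u. g (f j))"
    by (intro sum_mono2 finite_PiE fK assms(2)) (auto simp: K_def g_def intro!: prod_nonneg)
  also have "\<dots> = (\<Prod>j\<in>u. \<Sum>k\<in>K. g k)"
    by (rule prod_sum_PiE[symmetric]) (use assms(2) fK in auto)
  also have "\<dots> \<le> (\<Prod>j\<in>u. 2 * rzeta \<beta>)"
    by (intro prod_mono) (auto simp: g_def intro!: sum_nonneg zeta_finite[OF assms(1) fK K0])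
  finally show ?thesis unfolding g_def by simp
qed

definition sw :: "nat \<Rightarrow> real \<Rightarrow> (nat set \<Rightarrow> real) \<Rightarrow> real \<Rightarrow> (nat \<Rightarrow> int) \<Rightarrow> real" where
  "sw d \<alpha> \<gamma> lam h = r_weight d \<alpha> \<gamma> h powr (-1/lam)"

lemma sw_formula:
  assumes "\<gamma> (supp d h) > 0"
  shows "sw d \<alpha> \<gamma> lam h = \<gamma> (supp d h) powr (1/lam) * (\<Prod>j\<in>supp d h. \<bar>real_of_int (h j)\<bar> powr (-(\<alpha>/lam)))"
proof -
  have "sw d \<alpha> \<gamma> lam h = inverse (\<gamma> (supp d h)) powr (-1/lam) * (\<Prod>j\<in>supp d h. \<bar>real_of_int (h j)\<bar> powr \<alpha>) powr (-1/lam)"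
    unfolding sw_def r_weight_def using assms by (subst powr_mult) (auto intro: prod_nonneg)
  also have "inverse (\<gamma> (supp d h)) powr (-1/lam) = \<gamma> (supp d h) powr (1/lam)"
    by (simp add: inverse_powr powr_minus[symmetric])
  also have "(\<Prod>j\<in>supp d h. \<bar>real_of_int (h j)\<bar> powr \<alpha>) powr (-1/lam) = (\<Prod>j\<in>supp d h. \<bar>real_of_int (h j)\<bar> powr (-(\<alpha>/lam)))"
    by (subst prod_powr_distrib) (simp add: powr_powr)
  finally show ?thesis .
qed

lemma sw_nonneg: "0 \<le> sw d \<alpha> \<gamma> lam h" unfolding sw_def by simp

lemma supp_nonempty: "h \<in> intvecs d \<Longrightarrow> h \<noteq> (\<lambda>_. 0) \<Longrightarrow> supp d h \<noteq> {}"
proof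
  assume h: "h \<in> intvecs d" "h \<noteq> (\<lambda>_. 0)" and e: "supp d h = {}"
  have "h = (\<lambda>_. 0)"
  proof
    fix j show "h j = 0" using h(1) e unfolding supp_def intvecs_def by (cases "j \<in> {1..d}") auto
  qed
  then show False using h(2) by simp
qed

lemma V_bound:
  assumes "finite F" "F \<subseteq> intvecs d - {\<lambda>_. 0}" "0 < lam" "lam < \<alpha>"
    "\<And>u. finite u \<Longrightarrow> 0 < \<gamma> u"
  shows "(\<Sum>h\<in>F. sw d \<alpha> \<gamma> lam h) \<le> V d (\<alpha>/lam) (\<lambda>u. \<gamma> u powr (1/lam))"
proof -
  have b1: "\<alpha>/lam > 1" using assms by simp
  define U where "U = Pow {1..d} - {{}}"
  have sU: "supp d ` F \<subseteq> U" unfolding U_def using assms(2) supp_nonempty by (auto simp: supp_def)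
  have "(\<Sum>h\<in>F. sw d \<alpha> \<gamma> lam h) = (\<Sum>u\<in>U. \<Sum>h\<in>{h\<in>F. supp d h = u}. sw d \<alpha> \<gamma> lam h)"
    by (rule sum.group[symmetric]) (use assms(1) sU in \<open>auto simp: U_def\<close>)
  also have "\<dots> \<le> (\<Sum>u\<in>U. \<gamma> u powr (1/lam) * (2 * rzeta (\<alpha>/lam)) ^ card u)"
  proof (rule sum_mono)
    fix u assume uU: "u \<in> U"
    have fu: "finite u" using uU unfolding U_def by (auto intro: finite_subset)
    have "(\<Sum>h\<in>{h\<in>F. supp d h = u}. sw d \<alpha> \<gamma> lam h) = (\<Sum>h\<in>{h\<in>F. supp d h = u}. \<gamma> u powr (1/lam) * (\<Prod>j\<in>u. \<bar>real_of_int (h j)\<bar> powr (-(\<alpha>/lam))))"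
      by (rule sum.cong) (use assms(5) fu in \<open>auto simp: sw_formula\<close>)
    also have "\<dots> = \<gamma> u powr (1/lam) * (\<Sum>h\<in>{h\<in>F. supp d h = u}. \<Prod>j\<in>u. \<bar>real_of_int (h j)\<bar> powr (-(\<alpha>/lam)))"
      by (simp add: sum_distrib_left)
    also have "\<dots> \<le> \<gamma> u powr (1/lam) * (2 * rzeta (\<alpha>/lam)) ^ card u"
    proof (rule mult_left_mono)
      show "(\<Sum>h\<in>{h\<in>F. supp d h = u}. \<Prod>j\<in>u. \<bar>real_of_int (h j)\<bar> powr (-(\<alpha>/lam))) \<le> (2 * rzeta (\<alpha>/lam)) ^ card u"
      proof (rule prod_bound[OF b1 fu])
        show "finite {h\<in>F. supp d h = u}" using assms(1) by simp
        show "\<And>h j. h \<in> {h\<in>F. supp d h = u} \<Longrightarrow> j \<in> u \<Longrightarrow> h j \<noteq> 0" by (auto simp: supp_def)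
        show "inj_on (\<lambda>h. restrict h u) {h\<in>F. supp d h = u}"
        proof (rule inj_onI)
          fix x y assume x: "x \<in> {h\<in>F. supp d h = u}" and y: "y \<in> {h\<in>F. supp d h = u}" and e: "restrict x u = restrict y u"
          show "x = y"
          proof
            fix j
            show "x j = y j"
            proof (cases "j \<in> u")
              case True then show ?thesis using fun_cong[OF e, of j] by simp
            next
              case False
              then have "x j = 0" "y j = 0" using x y assms(2) unfolding supp_def intvecs_def by auto
              then show ?thesis by simp
            qed
          qed
        qed
      qed
    qed simp
    finally show "(\<Sum>h\<in>{h\<in>F. supp d h = u}. sw d \<alpha> \<gamma> lam h) \<le> \<gamma> u powr (1/lam) * (2 * rzeta (\<alpha>/lam)) ^ card u" .
  qed
  also have "\<dots> = V d (\<alpha>/lam) (\<lambda>u. \<gamma> u powr (1/lam))" unfolding V_def U_def by simp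
  finally show ?thesis .
qed



lemma div_bound:
  assumes p2: "p \<ge> 2" and h: "h \<in> intvecs d" "h \<noteq> (\<lambda>_. 0)" and dv: "\<And>j. int p dvd h j"
    and lam: "0 < lam" "lam < \<alpha>" and gpos: "\<And>u. finite u \<Longrightarrow> 0 < \<gamma> u"
  shows "(\<lambda>j. h j div int p) \<in> intvecs d - {\<lambda>_. 0}"
    and "sw d \<alpha> \<gamma> lam h \<le> sw d \<alpha> \<gamma> lam (\<lambda>j. h j div int p) / real p"
proof -
  define h' where "h' = (\<lambda>j. h j div int p)"
  have hh: "h j = int p * h' j" for j unfolding h'_def using dv[of j] by simp
  have su: "supp d h = supp d h'" unfolding supp_def using hh p2 by auto
  show "(\<lambda>j. h j div int p) \<in> intvecs d - {\<lambda>_. 0}"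
  proof -
    have "h' \<in> intvecs d" using h(1) unfolding intvecs_def h'_def by auto
    moreover have "h' \<noteq> (\<lambda>_. 0)" using h(2) hh by auto
    ultimately show ?thesis unfolding h'_def by simp
  qed
  define u where "u = supp d h"
  define \<beta> where "\<beta> = \<alpha> / lam"
  have b1: "\<beta> > 1" unfolding \<beta>_def using lam by simp
  have fu: "finite u" unfolding u_def supp_def by simp
  have une: "u \<noteq> {}" unfolding u_def using supp_nonempty[OF h] .
  have cu: "card u \<ge> 1" using fu une by (simp add: Suc_le_eq card_gt_0_iff)
  have gp: "0 < \<gamma> u" using gpos[OF fu] .
  have "sw d \<alpha> \<gamma> lam h = \<gamma> u powr (1/lam) * (\<Prod>j\<in>u. \<bar>real_of_int (h j)\<bar> powr (-\<beta>))"
    unfolding u_def \<beta>_def using gp u_def by (simp add: sw_formula)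
  also have "(\<Prod>j\<in>u. \<bar>real_of_int (h j)\<bar> powr (-\<beta>)) = (\<Prod>j\<in>u. real p powr (-\<beta>) * \<bar>real_of_int (h' j)\<bar> powr (-\<beta>))"
    by (rule prod.cong) (auto simp: hh abs_mult powr_mult)
  also have "\<dots> = (real p powr (-\<beta>)) ^ card u * (\<Prod>j\<in>u. \<bar>real_of_int (h' j)\<bar> powr (-\<beta>))"
    by (simp add: prod.distrib)
  finally have e1: "sw d \<alpha> \<gamma> lam h = \<gamma> u powr (1/lam) * ((real p powr (-\<beta>)) ^ card u * (\<Prod>j\<in>u. \<bar>real_of_int (h' j)\<bar> powr (-\<beta>)))" .
  have e2: "sw d \<alpha> \<gamma> lam h' = \<gamma> u powr (1/lam) * (\<Prod>j\<in>u. \<bar>real_of_int (h' j)\<bar> powr (-\<beta>))"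
    unfolding u_def \<beta>_def su using gp u_def su by (simp add: sw_formula)
  have "1 \<le> real p powr \<beta>" using p2 b1 by (intro ge_one_powr_ge_zero) auto
  then have pb: "real p powr (-\<beta>) \<le> 1" by (simp add: powr_minus_divide divide_le_eq)
  have "(real p powr (-\<beta>)) ^ card u \<le> (real p powr (-\<beta>)) ^ 1"
    by (rule power_decreasing[OF cu]) (use pb in auto)
  also have "\<dots> \<le> real p powr (-1)" using p2 b1 unfolding power_one_right by (intro powr_mono) auto
  also have "\<dots> = 1 / real p" by (simp add: powr_minus_divide)
  finally have pc: "(real p powr (-\<beta>)) ^ card u \<le> 1 / real p" .
  have "sw d \<alpha> \<gamma> lam h \<le> \<gamma> u powr (1/lam) * (1 / real p * (\<Prod>j\<in>u. \<bar>real_of_int (h' j)\<bar> powr (-\<beta>)))"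
    unfolding e1 by (intro mult_left_mono mult_right_mono pc) (auto intro: prod_nonneg)
  also have "\<dots> = sw d \<alpha> \<gamma> lam h' / real p" unfolding e2 by simp
  finally show "sw d \<alpha> \<gamma> lam h \<le> sw d \<alpha> \<gamma> lam (\<lambda>j. h j div int p) / real p" unfolding h'_def .
qed



lemma total_bound:
  assumes pr: "prime p" and fH: "finite Hs" and sH: "Hs \<subseteq> intvecs d - {\<lambda>_. 0}"
    and lam: "0 < lam" "lam < \<alpha>" and gpos: "\<And>u. finite u \<Longrightarrow> 0 < \<gamma> u"
  shows "(\<Sum>h\<in>Hs. sw d \<alpha> \<gamma> lam h * real (card {z\<in>genvecs d p. dotp d h z mod int p = 0}))
         \<le> 2 * real (card (genvecs d p)) * V d (\<alpha>/lam) (\<lambda>u. \<gamma> u powr (1/lam)) / (real p - 1)"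
proof -
  define N where "N = real (card (genvecs d p))"
  define VV where "VV = V d (\<alpha>/lam) (\<lambda>u. \<gamma> u powr (1/lam))"
  define cnt where "cnt h = real (card {z\<in>genvecs d p. dotp d h z mod int p = 0})" for h
  define s where "s h = sw d \<alpha> \<gamma> lam h" for h
  have p2: "p \<ge> 2" using pr prime_ge_2_nat by blast
  have V0: "0 \<le> VV" unfolding VV_def using V_bound[of "{}" d lam \<alpha> \<gamma>] lam gpos by simp
  have N0: "0 \<le> N" unfolding N_def by simp
  define H1 where "H1 = {h\<in>Hs. \<exists>j\<in>{1..d}. \<not> int p dvd h j}"
  define H0 where "H0 = Hs - H1"
  have split: "(\<Sum>h\<in>Hs. s h * cnt h) = (\<Sum>h\<in>H1. s h * cnt h) + (\<Sum>h\<in>H0. s h * cnt h)"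
  proof -
    have "H1 \<subseteq> Hs" unfolding H1_def by auto
    from sum.subset_diff[OF this fH] show ?thesis by (simp add: H0_def add.commute)
  qed
  have b1: "(\<Sum>h\<in>H1. s h * cnt h) \<le> N / (real p - 1) * VV"
  proof -
    have "(\<Sum>h\<in>H1. s h * cnt h) \<le> (\<Sum>h\<in>H1. s h * (N / (real p - 1)))"
    proof (rule sum_mono)
      fix h assume "h \<in> H1"
      then obtain j where j: "j \<in> {1..d}" "\<not> int p dvd h j" unfolding H1_def by auto
      have "card {z\<in>genvecs d p. dotp d h z mod int p = 0} * (p-1) \<le> card (genvecs d p)"
        using count_bound[of p j d h] pr j by blast
      then have "real (card {z\<in>genvecs d p. dotp d h z mod int p = 0} * (p-1)) \<le> N" unfolding N_def
        by (simp only: of_nat_le_iff)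
      moreover have "real (p - 1) = real p - 1" using p2 by (simp add: of_nat_diff)
      ultimately have "cnt h * (real p - 1) \<le> N" unfolding cnt_def by (simp only: of_nat_mult)
      then have "cnt h \<le> N / (real p - 1)" using p2 by (simp add: le_divide_eq)
      then show "s h * cnt h \<le> s h * (N / (real p - 1))" unfolding s_def by (intro mult_left_mono sw_nonneg)
    qed
    also have "\<dots> = (\<Sum>h\<in>H1. s h) * (N / (real p - 1))" by (rule sum_distrib_right[symmetric])
    also have "\<dots> = N / (real p - 1) * (\<Sum>h\<in>H1. s h)" by (rule mult.commute)
    also have "\<dots> \<le> N / (real p - 1) * VV"
      unfolding s_def VV_def using p2 N0 fH sH lam gpos
      by (intro mult_left_mono V_bound) (auto simp: H1_def)
    finally show ?thesis .
  qed
  have b0: "(\<Sum>h\<in>H0. s h * cnt h) \<le> N / real p * VV"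
  proof -
    define \<delta> where "\<delta> h = (\<lambda>j. h j div int p)" for h :: "nat \<Rightarrow> int"
    have dvall: "int p dvd h j" if "h \<in> H0" for h j
    proof (cases "j \<in> {1..d}")
      case True then show ?thesis using that unfolding H0_def H1_def by auto
    next
      case False then have "h j = 0" using that sH unfolding H0_def intvecs_def by auto
      then show ?thesis by simp
    qed
    have hin: "h \<in> intvecs d" "h \<noteq> (\<lambda>_. 0)" if "h \<in> H0" for h using that sH unfolding H0_def by auto
    have "(\<Sum>h\<in>H0. s h * cnt h) \<le> (\<Sum>h\<in>H0. s (\<delta> h) / real p * N)"
    proof (rule sum_mono)
      fix h assume h: "h \<in> H0"
      have "cnt h \<le> N" unfolding cnt_def N_def by (simp add: card_mono finite_genvecs)
      moreover have "s h \<le> s (\<delta> h) / real p" unfolding s_def \<delta>_def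
        by (rule div_bound(2)[OF p2 hin[OF h] dvall[OF h] lam gpos])
      ultimately show "s h * cnt h \<le> s (\<delta> h) / real p * N"
        by (intro mult_mono) (auto simp: s_def sw_nonneg cnt_def)
    qed
    also have "\<dots> = (\<Sum>h\<in>H0. s (\<delta> h) * (N / real p))" by (rule sum.cong) auto
    also have "\<dots> = (\<Sum>h\<in>H0. s (\<delta> h)) * (N / real p)" by (rule sum_distrib_right[symmetric])
    also have "\<dots> = N / real p * (\<Sum>h\<in>H0. s (\<delta> h))" by (rule mult.commute)
    also have "(\<Sum>h\<in>H0. s (\<delta> h)) = (\<Sum>h\<in>\<delta> ` H0. s h)"
    proof (rule sum.reindex[symmetric, unfolded comp_def])
      show "inj_on \<delta> H0"
      proof (rule inj_onI)
        fix x y assume x: "x \<in> H0" and y: "y \<in> H0" and e: "\<delta> x = \<delta> y"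
        show "x = y"
        proof
          fix j
          have "x j = int p * (x j div int p)" "y j = int p * (y j div int p)" using dvall[OF x, of j] dvall[OF y, of j] by auto
          then show "x j = y j" using fun_cong[OF e, of j] unfolding \<delta>_def by metis
        qed
      qed
    qed
    also have "N / real p * (\<Sum>h\<in>\<delta> ` H0. s h) \<le> N / real p * VV"
    proof (intro mult_left_mono)
      show "(\<Sum>h\<in>\<delta> ` H0. s h) \<le> VV" unfolding s_def VV_def
      proof (rule V_bound[OF _ _ lam gpos])
        show "finite (\<delta> ` H0)" using fH unfolding H0_def by simp
        show "\<delta> ` H0 \<subseteq> intvecs d - {\<lambda>_. 0}"
        proof
          fix x assume "x \<in> \<delta> ` H0"
          then obtain h where h: "h \<in> H0" and x: "x = \<delta> h" by auto
          show "x \<in> intvecs d - {\<lambda>_. 0}" unfolding x \<delta>_def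
            by (rule div_bound(1)[OF p2 hin[OF h] dvall[OF h] lam gpos])
        qed
      qed
    qed (use N0 in simp)
    finally show ?thesis .
  qed
  have "N / real p * VV \<le> N / (real p - 1) * VV"
    using p2 N0 V0 by (intro mult_right_mono divide_left_mono) auto
  moreover have "2 * N * VV / (real p - 1) = N / (real p - 1) * VV + N / (real p - 1) * VV" by simp
  ultimately have "(\<Sum>h\<in>Hs. s h * cnt h) \<le> 2 * N * VV / (real p - 1)" using split b1 b0 by linarith
  then show ?thesis unfolding s_def cnt_def N_def VV_def .
qed



lemma r_pos:
  assumes "h \<in> dual_nz d p z" "\<And>u. finite u \<Longrightarrow> 0 < \<gamma> u"
  shows "0 < r_weight d \<alpha> \<gamma> h"
proof -
  have "0 < \<gamma> (supp d h)" using assms(2) by (simp add: supp_def)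
  moreover have "0 < (\<Prod>j\<in>supp d h. \<bar>real_of_int (h j)\<bar> powr \<alpha>)"
    by (rule prod_pos) (auto simp: supp_def)
  ultimately show ?thesis unfolding r_weight_def by simp
qed

lemma a_eq:
  fixes r lam :: real
  assumes "0 < r" "0 < lam"
  shows "(r powr (-1/lam)) powr (2*lam) = r powi (-2)"
proof -
  have "(r powr (-1/lam)) powr (2*lam) = r powr (-2)" using assms by (simp add: powr_powr)
  also have "\<dots> = r powi (-2)" using assms by (simp add: powr_minus power_int_minus powr_numeral)
  finally show ?thesis .
qed

lemma cancel_aux: "(q::real) \<noteq> 0 \<Longrightarrow> m \<noteq> 0 \<Longrightarrow> q * (2 / (q * m)) = 2 / m"
  by (simp add: field_simps)

lemma core:
  assumes pr: "prime p" and tau: "0 < \<tau>" "\<tau> < 1" and lam: "1/2 \<le> lam" "lam < \<alpha>"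
    and gpos: "\<And>u. finite u \<Longrightarrow> 0 < \<gamma> u"
    and WG: "W \<subseteq> genvecs d p" and cW: "real (card W) > (1 - \<tau>) * real (card (genvecs d p))"
    and Wle: "\<And>z'. z' \<in> W \<Longrightarrow> e_det_sq d \<alpha> \<gamma> p z \<le> e_det_sq d \<alpha> \<gamma> p z'"
  shows "e_det_sq d \<alpha> \<gamma> p z \<le> ennreal ((2 / ((1 - \<tau>) * (real p - 1)) * V d (\<alpha>/lam) (\<lambda>u. \<gamma> u powr (1/lam))) powr (2*lam))"
proof (rule ccontr)
  define VV where "VV = V d (\<alpha>/lam) (\<lambda>u. \<gamma> u powr (1/lam))"
  define B where "B = 2 / ((1 - \<tau>) * (real p - 1)) * VV"
  define N where "N = real (card (genvecs d p))"
  define s where "s h = sw d \<alpha> \<gamma> lam h" for h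
  define a where "a h = r_weight d \<alpha> \<gamma> h powi (-2)" for h
  have lam0: "0 < lam" using lam by simp
  have p2: "p \<ge> 2" using pr prime_ge_2_nat by blast
  have V0: "0 \<le> VV" unfolding VV_def using V_bound[of "{}" d lam \<alpha> \<gamma>] lam0 lam gpos by simp
  have B0: "0 \<le> B" unfolding B_def using V0 tau p2 by simp
  assume "\<not> e_det_sq d \<alpha> \<gamma> p z \<le> ennreal (B powr (2*lam))"
  then have lt: "ennreal (B powr (2*lam)) < e_det_sq d \<alpha> \<gamma> p z" unfolding B_def VV_def by simp
  have ex: "\<exists>F. finite F \<and> F \<subseteq> dual_nz d p z' \<and> B < sum s F" if z': "z' \<in> W" for z'
  proof -
    have "ennreal (B powr (2*lam)) < e_det_sq d \<alpha> \<gamma> p z'" using lt Wle[OF z'] by (rule less_le_trans)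
    also have "e_det_sq d \<alpha> \<gamma> p z' = (SUP F\<in>{F. finite F \<and> F \<subseteq> dual_nz d p z'}. (\<Sum>h\<in>F. ennreal (a h)))"
      unfolding e_det_sq_def a_def by (rule nonneg_infsum_complete) simp
    finally obtain F where F: "finite F" "F \<subseteq> dual_nz d p z'" and lF: "ennreal (B powr (2*lam)) < (\<Sum>h\<in>F. ennreal (a h))"
      by (auto simp: less_SUP_iff)
    have "(\<Sum>h\<in>F. ennreal (a h)) = ennreal (sum a F)" by (rule sum_ennreal) (simp add: a_def power_int_minus)
    with lF have "B powr (2*lam) < sum a F" by (simp add: ennreal_less_iff)
    also have "sum a F = (\<Sum>h\<in>F. s h powr (2*lam))"
    proof (rule sum.cong)
      fix h assume "h \<in> F"
      then have "0 < r_weight d \<alpha> \<gamma> h" using F(2) r_pos gpos by blast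
      then show "a h = s h powr (2*lam)" unfolding a_def s_def sw_def using a_eq lam0 by simp
    qed simp
    also have "\<dots> \<le> (sum s F) powr (2*lam)"
      by (rule sum_powr_le[OF F(1)]) (use lam in \<open>auto simp: s_def sw_nonneg\<close>)
    finally have "B powr (2*lam) < (sum s F) powr (2*lam)" .
    have "B < sum s F"
    proof (rule ccontr)
      assume "\<not> B < sum s F"
      then have "sum s F \<le> B" by simp
      moreover have "0 \<le> sum s F" by (rule sum_nonneg) (simp add: s_def sw_nonneg)
      ultimately have "(sum s F) powr (2*lam) \<le> B powr (2*lam)" using lam0 by (intro powr_mono2) auto
      with \<open>B powr (2*lam) < (sum s F) powr (2*lam)\<close> show False by simp
    qed
    with F show ?thesis by blast
  qed
  then have "\<forall>z'\<in>W. \<exists>F. finite F \<and> F \<subseteq> dual_nz d p z' \<and> B < sum s F" by blast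
  then have "\<exists>Fz. \<forall>z'\<in>W. finite (Fz z') \<and> Fz z' \<subseteq> dual_nz d p z' \<and> B < sum s (Fz z')" by (rule bchoice)
  then obtain Fz where Fz: "\<And>z'. z' \<in> W \<Longrightarrow> finite (Fz z') \<and> Fz z' \<subseteq> dual_nz d p z' \<and> B < sum s (Fz z')"
    by blast
  have fW: "finite W" using WG finite_genvecs finite_subset by blast
  have "0 \<le> (1 - \<tau>) * real (card (genvecs d p))" using tau by simp
  then have Wne: "W \<noteq> {}" using cW by (cases "W = {}") auto
  define Hs where "Hs = (\<Union>z'\<in>W. Fz z')"
  have fHs: "finite Hs" unfolding Hs_def using fW Fz by auto
  have sHs: "Hs \<subseteq> intvecs d - {\<lambda>_. 0}" unfolding Hs_def using Fz by (auto simp: dual_nz_def)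
  have "real (card W) * B = (\<Sum>z'\<in>W. B)" by simp
  also have "\<dots> < (\<Sum>z'\<in>W. sum s (Fz z'))" using Fz fW Wne by (intro sum_strict_mono) auto
  also have "\<dots> \<le> (\<Sum>z'\<in>W. \<Sum>h\<in>{h\<in>Hs. dotp d h z' mod int p = 0}. s h)"
  proof (rule sum_mono)
    fix z' assume z': "z' \<in> W"
    show "sum s (Fz z') \<le> (\<Sum>h\<in>{h\<in>Hs. dotp d h z' mod int p = 0}. s h)"
    proof (rule sum_mono2)
      show "finite {h\<in>Hs. dotp d h z' mod int p = 0}" using fHs by simp
      show "Fz z' \<subseteq> {h\<in>Hs. dotp d h z' mod int p = 0}" using Fz[OF z'] z' unfolding Hs_def dual_nz_def by auto
    qed (simp add: s_def sw_nonneg)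
  qed
  also have "\<dots> = (\<Sum>h\<in>Hs. \<Sum>z'\<in>{z'\<in>W. dotp d h z' mod int p = 0}. s h)"
    by (rule sum.swap_restrict[OF fW fHs])
  also have "\<dots> = (\<Sum>h\<in>Hs. s h * real (card {z'\<in>W. dotp d h z' mod int p = 0}))" by (simp add: mult.commute)
  also have "\<dots> \<le> (\<Sum>h\<in>Hs. s h * real (card {z\<in>genvecs d p. dotp d h z mod int p = 0}))"
    by (intro sum_mono mult_left_mono) (use WG finite_genvecs in \<open>auto simp: s_def sw_nonneg intro!: card_mono\<close>)
  also have "\<dots> \<le> 2 * N * VV / (real p - 1)"
    unfolding s_def N_def VV_def using lam lam0 by (intro total_bound[OF pr fHs sHs _ _ gpos]) auto
  also have "\<dots> = (1 - \<tau>) * N * B"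
  proof -
    have t1: "1 - \<tau> \<noteq> 0" using tau by simp
    have p1: "real p - 1 \<noteq> 0" using p2 by simp
    have e: "(1-\<tau>) * (2 / ((1-\<tau>) * (real p - 1))) = 2 / (real p - 1)" using cancel_aux[OF t1 p1] .
    have "(1-\<tau>)*N*B = N*VV*((1-\<tau>)*(2/((1-\<tau>)*(real p-1))))" unfolding B_def by (simp only: mult_ac)
    also have "\<dots> = N*VV*(2/(real p-1))" by (simp only: e)
    also have "\<dots> = 2*N*VV/(real p - 1)" by simp
    finally show ?thesis by simp
  qed
  also have "\<dots> \<le> real (card W) * B" using cW B0 unfolding N_def by (intro mult_right_mono) auto
  finally show False by simp
qed



theorem mainTheorem2:
  fixes p d :: nat and \<tau> \<alpha> :: real and \<gamma> :: "nat set \<Rightarrow> real"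
  assumes "prime p"
    and "0 < \<tau>" and "\<tau> < 1"
    and "\<alpha> > 1/2"
    and "\<gamma> {} = 1"
    and "\<And>u. finite u \<Longrightarrow> 0 < \<gamma> u \<and> \<gamma> u \<le> 1"
  shows "\<exists>Z. Z \<subseteq> genvecs d p \<and>
           card Z \<ge> nat \<lceil>\<tau> * (real p - 1) ^ d\<rceil> \<and>
           (\<forall>z\<in>Z. e_det_sq d \<alpha> \<gamma> p z \<le>
              ennreal ((INF lam\<in>{1/2..<\<alpha>}.
                 (2 / ((1 - \<tau>) * (real p - 1)) * V d (\<alpha> / lam) (\<lambda>u. \<gamma> u powr (1 / lam))) powr lam) ^ 2))"
proof -
  define G where "G = genvecs d p"
  define E where "E z = e_det_sq d \<alpha> \<gamma> p z" for z
  define K where "K = nat \<lceil>\<tau> * (real p - 1) ^ d\<rceil>"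
  define B where "B lam = 2 / ((1 - \<tau>) * (real p - 1)) * V d (\<alpha> / lam) (\<lambda>u. \<gamma> u powr (1 / lam))" for lam
  have gpos: "\<And>u. finite u \<Longrightarrow> 0 < \<gamma> u" using assms(6) by blast
  have p2: "p \<ge> 2" using assms(1) prime_ge_2_nat by blast
  have fG: "finite G" unfolding G_def by (rule finite_genvecs)
  have cG: "card G = (p - 1) ^ d" unfolding G_def using p2 by (intro card_genvecs) auto
  have NR: "real (card G) = (real p - 1) ^ d" unfolding cG using p2 by (simp add: of_nat_diff)
  have N0: "0 \<le> (real p - 1) ^ d" using p2 by simp
  have KN: "K \<le> card G"
  proof -
    have "\<tau> * (real p - 1) ^ d \<le> of_int (int (card G))" using NR N0 assms(2,3) mult_left_le_one_le[of "(real p - 1) ^ d" \<tau>] by simp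
    then have "\<lceil>\<tau> * (real p - 1) ^ d\<rceil> \<le> int (card G)" by (rule ceiling_le)
    then show ?thesis unfolding K_def by (simp only: nat_le_iff)
  qed
  have Klt: "real K < \<tau> * (real p - 1) ^ d + 1"
  proof -
    have "0 \<le> \<tau> * (real p - 1) ^ d" using assms(2) N0 by simp
    then have "real K = real_of_int \<lceil>\<tau> * (real p - 1) ^ d\<rceil>" unfolding K_def by simp
    also have "\<dots> < \<tau> * (real p - 1) ^ d + 1" by linarith
    finally show ?thesis .
  qed
  define Z where "Z = {z\<in>G. card {z'\<in>G. E z' < E z} < K}"
  have ZG: "Z \<subseteq> G" unfolding Z_def by auto
  have cZ: "K \<le> card Z"
  proof (cases "Z = G")
    case True then show ?thesis using KN by simp
  next
    case False
    then have ne: "G - Z \<noteq> {}" using ZG by auto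
    have fin: "finite (E ` (G - Z))" using fG by simp
    have "Min (E ` (G - Z)) \<in> E ` (G - Z)" using fin ne by (intro Min_in) auto
    then obtain z0 where z0: "z0 \<in> G - Z" and z0m: "E z0 = Min (E ` (G - Z))" by auto
    have z0le: "E z0 \<le> E z" if "z \<in> G - Z" for z unfolding z0m using fin that by (intro Min_le) auto
    have "K \<le> card {z'\<in>G. E z' < E z0}" using z0 unfolding Z_def by auto
    also have "\<dots> \<le> card Z"
    proof (rule card_mono)
      show "finite Z" using fG ZG finite_subset by blast
      show "{z'\<in>G. E z' < E z0} \<subseteq> Z"
      proof
        fix z' assume z': "z' \<in> {z'\<in>G. E z' < E z0}"
        show "z' \<in> Z"
        proof (rule ccontr)
          assume "z' \<notin> Z"
          then have "E z0 \<le> E z'" using z' z0le by auto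
          then show False using z' by (simp add: not_le[symmetric])
        qed
      qed
    qed
    finally show ?thesis .
  qed
  have good: "E z \<le> ennreal ((INF lam\<in>{1/2..<\<alpha>}. B lam powr lam) ^ 2)" if zZ: "z \<in> Z" for z
  proof -
    define W where "W = {z'\<in>G. E z \<le> E z'}"
    define L where "L = {z'\<in>G. E z' < E z}"
    have cL: "card L < K" using zZ unfolding Z_def L_def by auto
    have "card G = card W + card L"
    proof -
      have "G = W \<union> L" "W \<inter> L = {}" unfolding W_def L_def by auto
      then show ?thesis using fG card_Un_disjoint[of W L] by (metis finite_Un)
    qed
    then have "real (card W) = real (card G) - real (card L)" by simp
    moreover have "real (card L) + 1 \<le> real K" using cL by linarith
    ultimately have cW: "real (card W) > (1 - \<tau>) * real (card G)" using Klt NR by (simp add: algebra_simps)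
    have each: "E z \<le> ennreal ((B lam powr lam) ^ 2)" if lam: "lam \<in> {1/2..<\<alpha>}" for lam
    proof -
      have "E z \<le> ennreal (B lam powr (2*lam))" unfolding E_def B_def
      proof (rule core[OF assms(1) assms(2) assms(3) _ _ gpos, where lam=lam and W=W])
        show "1/2 \<le> lam" "lam < \<alpha>" using lam by auto
        show "W \<subseteq> genvecs d p" unfolding W_def G_def by blast
        show "(1 - \<tau>) * real (card (genvecs d p)) < real (card W)" using cW unfolding G_def .
        show "\<And>z'. z' \<in> W \<Longrightarrow> e_det_sq d \<alpha> \<gamma> p z \<le> e_det_sq d \<alpha> \<gamma> p z'" unfolding W_def E_def by blast
      qed
      also have "B lam powr (2*lam) = (B lam powr lam) ^ 2" by (simp add: power2_eq_square powr_add[symmetric])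
      finally show ?thesis .
    qed
    have hne: "1/2 \<in> {1/2..<\<alpha>}" using assms(4) by simp
    have "E z \<le> ennreal ((B (1/2) powr (1/2)) ^ 2)" using each[OF hne] .
    then have "E z \<noteq> top" by (rule neq_top_trans[rotated]) simp
    then obtain e where e0: "0 \<le> e" and Ee: "E z = ennreal e" by (cases "E z") auto
    have "sqrt e \<le> B lam powr lam" if lam: "lam \<in> {1/2..<\<alpha>}" for lam
    proof -
      have "e \<le> (B lam powr lam) ^ 2" using each[OF lam] unfolding Ee by (simp add: ennreal_le_iff)
      then have "sqrt e \<le> sqrt ((B lam powr lam) ^ 2)" by (rule real_sqrt_le_mono)
      then show ?thesis by simp
    qed
    then have "sqrt e \<le> (INF lam\<in>{1/2..<\<alpha>}. B lam powr lam)" using hne by (intro cINF_greatest) auto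
    then have "(sqrt e) ^ 2 \<le> (INF lam\<in>{1/2..<\<alpha>}. B lam powr lam) ^ 2" using e0 by (intro power_mono) auto
    then have "e \<le> (INF lam\<in>{1/2..<\<alpha>}. B lam powr lam) ^ 2" using e0 by simp
    then show ?thesis unfolding Ee by (rule ennreal_leI)
  qed
  have good': "\<forall>z\<in>Z. e_det_sq d \<alpha> \<gamma> p z \<le>
              ennreal ((INF lam\<in>{1/2..<\<alpha>}.
                 (2 / ((1 - \<tau>) * (real p - 1)) * V d (\<alpha> / lam) (\<lambda>u. \<gamma> u powr (1 / lam))) powr lam) ^ 2)"
    using good unfolding E_def B_def by blast
  show ?thesis using ZG cZ good' unfolding G_def K_def by blast
qed

end
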